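(* Fix $X_2=x_2.E_2$ with $x_2\in U$, $E_2\in\mathfrak g$, and fix $E_1\in\mathfrak g$. Define, as functions of $x_1$, $\mathcal D_0(x_1;X_2)=\frac{M(X_2)}{(x_1-x_2)^2}$ and $\mathcal D_{k+1}(x_1;X_2)=\frac{d}{dx_1}\mathcal D_k(x_1;X_2)+[\mathcal D_k(x_1;X_2),\mathcal D(x_1)]$. Then there exist coefficients $\alpha_k(x_1;X_2)$, $k=0,\dots,\dim\mathfrak g$, each a polynomial in $x_1$ (with coefficients depending on $X_2$), not all zero, such that $\sum_{k=0}^{\dim\mathfrak g}\alpha_k(x_1;X_2)\mathcal D_k(x_1;X_2)=0$ and $$\sum_{k=0}^{\dim\mathfrak g}\alpha_k(x_1;X_2)\frac{d^k}{dx_1^k}W_2(x_1.E_1,X_2)=0$$ for $x_1\in U\setminus\{x_2\}$.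
   Context: Let $G\subset GL(r,\mathbb C)$ be a complex reductive Lie group given in a faithful matrix representation, with Lie algebra $\mathfrak g\subset\mathfrak{gl}(r,\mathbb C)$; ${\rm Tr}$ denotes the matrix trace. Let $\mathcal D(x)$ be an $r\times r$ matrix with rational entries in $x$, $\mathcal D(x)\in\mathfrak g$. Let $\Psi(x)$ be a holomorphic $G$-valued solution of $\frac{d}{dx}\Psi=\mathcal D\Psi$ on a simply connected domain $U\subset\mathbb C$ avoiding the poles of $\mathcal D$. For $x\in U$, $E\in\mathfrak g$, write $x.E$ for the pair and $M(x.E)=\Psi(x)E\Psi(x)^{-1}$. For $X_i=x_i.E_i$ with $x_1\ne x_2$ define $W_2(X_1,X_2)=\frac{1}{(x_1-x_2)^2}{\rm Tr}\,M(X_1)M(X_2)$. *)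

theory Defs
  imports "HOL-Analysis.Analysis" "HOL-Computational_Algebra.Polynomial"
begin

text \<open>Complex r x r matrices are modelled as complex^'n^'n, with r = CARD('n).\<close>

definition cmat_scale :: "complex \<Rightarrow> complex^'n^'n \<Rightarrow> complex^'n^'n" (infixr "\<odot>" 75)
  where "c \<odot> A = (\<chi> i j. c * A $ i $ j)"

lemma vector_space_cmat_scale: "vector_space cmat_scale"
  by unfold_locales (simp_all add: cmat_scale_def vec_eq_iff distrib_left distrib_right mult.assoc)

text \<open>Complex dimension of a set (subspace) of matrices.\<close>
definition cdim :: "(complex^'n^'n) set \<Rightarrow> nat"
  where "cdim S = vector_space.dim cmat_scale S"

definition csubspace :: "(complex^'n^'n) set \<Rightarrow> bool"
  where "csubspace S = module.subspace cmat_scale S"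

text \<open>Matrix commutator.\<close>
definition mbracket :: "complex^'n^'n \<Rightarrow> complex^'n^'n \<Rightarrow> complex^'n^'n"
  where "mbracket A B = A ** B - B ** A"

text \<open>Matrix exponential.\<close>
definition mexp :: "complex^'n^'n \<Rightarrow> complex^'n^'n"
  where "mexp A = (\<Sum>k. (1 / fact k) \<odot> (((**) A) ^^ k) (mat 1))"

text \<open>G is a (topologically) closed subgroup of GL(r,C) whose Lie algebra
  g = {A. exp(tA) in G for all real t} is a complex subspace (complex Lie subgroup).\<close>
definition complex_linear_lie_group :: "(complex^'n^'n) set \<Rightarrow> (complex^'n^'n) set \<Rightarrow> bool"
  where "complex_linear_lie_group G g \<longleftrightarrow>
     G \<subseteq> {A. invertible A} \<and> mat 1 \<in> G \<and>
     (\<forall>A\<in>G. \<forall>B\<in>G. A ** B \<in> G) \<and> (\<forall>A\<in>G. matrix_inv A \<in> G) \<and>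
     closedin (top_of_set {A. invertible A}) G \<and>
     g = {A. \<forall>t::real. mexp (t *\<^sub>R A) \<in> G} \<and>
     csubspace g"

text \<open>Ideals of a matrix Lie algebra and reductivity
  (every ideal has a complementary ideal).\<close>
definition lie_ideal :: "(complex^'n^'n) set \<Rightarrow> (complex^'n^'n) set \<Rightarrow> bool"
  where "lie_ideal g I \<longleftrightarrow> csubspace I \<and> I \<subseteq> g \<and> (\<forall>A\<in>g. \<forall>B\<in>I. mbracket A B \<in> I)"

definition reductive_lie_algebra :: "(complex^'n^'n) set \<Rightarrow> bool"
  where "reductive_lie_algebra g \<longleftrightarrow>
     csubspace g \<and> (\<forall>A\<in>g. \<forall>B\<in>g. mbracket A B \<in> g) \<and>
     (\<forall>I. lie_ideal g I \<longrightarrow>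
        (\<exists>J. lie_ideal g J \<and> I \<inter> J = {0} \<and> (\<forall>A\<in>g. \<exists>B\<in>I. \<exists>C\<in>J. A = B + C)))"

definition complex_reductive_lie_group :: "(complex^'n^'n) set \<Rightarrow> (complex^'n^'n) set \<Rightarrow> bool"
  where "complex_reductive_lie_group G g \<longleftrightarrow>
     complex_linear_lie_group G g \<and> reductive_lie_algebra g"

text \<open>D is a matrix of rational functions none of whose poles lies in U.\<close>
definition rational_matrix_no_poles_on :: "(complex \<Rightarrow> complex^'n^'n) \<Rightarrow> complex set \<Rightarrow> bool"
  where "rational_matrix_no_poles_on D U \<longleftrightarrow>
     (\<exists>P Q. \<forall>i j. Q i j \<noteq> (0::complex poly) \<and>
        (\<forall>x. D x $ i $ j = poly (P i j) x / poly (Q i j) x) \<and>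
        (\<forall>x\<in>U. poly (Q i j) x \<noteq> 0))"

text \<open>Entrywise complex derivative of a matrix-valued function.\<close>
definition mderiv :: "(complex \<Rightarrow> complex^'n^'n) \<Rightarrow> complex \<Rightarrow> complex^'n^'n"
  where "mderiv F x = (\<chi> i j. deriv (\<lambda>y. F y $ i $ j) x)"

text \<open>Psi is holomorphic on U, G-valued, and solves Psi' = D Psi.\<close>
definition fundamental_solution ::
  "(complex \<Rightarrow> complex^'n^'n) \<Rightarrow> (complex \<Rightarrow> complex^'n^'n) \<Rightarrow> (complex^'n^'n) set \<Rightarrow> complex set \<Rightarrow> bool"
  where "fundamental_solution \<Psi> D G U \<longleftrightarrow>
     (\<forall>i j. (\<lambda>x. \<Psi> x $ i $ j) holomorphic_on U) \<and>
     (\<forall>x\<in>U. \<Psi> x \<in> G) \<and>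
     (\<forall>x\<in>U. \<forall>i j. ((\<lambda>y. \<Psi> y $ i $ j) has_field_derivative (D x ** \<Psi> x) $ i $ j) (at x))"

text \<open>M(x.E) = Psi(x) E Psi(x)^{-1}.\<close>
definition Mconj :: "(complex \<Rightarrow> complex^'n^'n) \<Rightarrow> complex \<Rightarrow> complex^'n^'n \<Rightarrow> complex^'n^'n"
  where "Mconj \<Psi> x E = \<Psi> x ** E ** matrix_inv (\<Psi> x)"

text \<open>W_2(X_1,X_2) = Tr(M(X_1) M(X_2)) / (x_1-x_2)^2.\<close>
definition W2 :: "(complex \<Rightarrow> complex^'n^'n) \<Rightarrow> complex \<Rightarrow> complex^'n^'n \<Rightarrow> complex \<Rightarrow> complex^'n^'n \<Rightarrow> complex"
  where "W2 \<Psi> x1 E1 x2 E2 = trace (Mconj \<Psi> x1 E1 ** Mconj \<Psi> x2 E2) / (x1 - x2)^2"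

text \<open>The sequence D_k(x_1; X_2).\<close>
fun Dk :: "(complex \<Rightarrow> complex^'n^'n) \<Rightarrow> (complex \<Rightarrow> complex^'n^'n) \<Rightarrow> complex \<Rightarrow> complex^'n^'n
            \<Rightarrow> nat \<Rightarrow> complex \<Rightarrow> complex^'n^'n" where
  "Dk \<Psi> D x2 E2 0 = (\<lambda>x1. (1 / (x1 - x2)^2) \<odot> Mconj \<Psi> x2 E2)"
| "Dk \<Psi> D x2 E2 (Suc k) = (\<lambda>x1. mderiv (Dk \<Psi> D x2 E2 k) x1 + mbracket (Dk \<Psi> D x2 E2 k x1) (D x1))"

end

theory Submission
  imports Defs
begin


lemma idom_dep:
  fixes v :: "'k \<Rightarrow> 'i \<Rightarrow> 'a::idom"
  assumes "finite I"
  shows "finite K \<Longrightarrow> card I < card K \<Longrightarrow>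
    \<exists>\<alpha>. (\<exists>k\<in>K. \<alpha> k \<noteq> 0) \<and> (\<forall>i\<in>I. (\<Sum>k\<in>K. \<alpha> k * v k i) = 0)"
  using assms
proof (induction I arbitrary: K v rule: finite_induct)
  case empty
  then have "K \<noteq> {}" by auto
  then show ?case by (intro exI[of _ "\<lambda>_. 1"]) auto
next
  case (insert i I)
  show ?case
  proof (cases "\<forall>k\<in>K. v k i = 0")
    case True
    have "card I < card K" using insert by auto
    from insert.IH[OF insert.prems(1) this, of v]
    obtain \<alpha> where a: "\<exists>k\<in>K. \<alpha> k \<noteq> 0" "\<forall>i\<in>I. (\<Sum>k\<in>K. \<alpha> k * v k i) = 0" by blast
    show ?thesis using a True by (intro exI[of _ \<alpha>]) auto
  next
    case False
    then obtain j where j: "j \<in> K" "v j i \<noteq> 0" by auto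
    define c where "c = v j i"
    define w where "w k l = c * v k l - v k i * v j l" for k l
    have cK: "card I < card (K - {j})" using insert j by auto
    from insert.IH[OF _ cK, of w] insert.prems
    obtain \<beta> where b: "\<exists>k\<in>K - {j}. \<beta> k \<noteq> 0" "\<forall>l\<in>I. (\<Sum>k\<in>K-{j}. \<beta> k * w k l) = 0" by auto
    define \<alpha> where "\<alpha> k = (if k = j then - (\<Sum>k\<in>K-{j}. \<beta> k * v k i) else c * \<beta> k)" for k
    have key: "(\<Sum>k\<in>K. \<alpha> k * v k l) = (\<Sum>k\<in>K-{j}. \<beta> k * w k l)" if "l = i \<or> l \<in> I" for l
    proof -
      have "(\<Sum>k\<in>K. \<alpha> k * v k l) = \<alpha> j * v j l + (\<Sum>k\<in>K-{j}. \<alpha> k * v k l)"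
        using j insert.prems by (simp add: sum.remove)
      also have "\<dots> = (\<Sum>k\<in>K-{j}. \<beta> k * (c * v k l - v k i * v j l))"
        by (simp add: \<alpha>_def sum_distrib_right sum_distrib_left sum_subtractf algebra_simps)
      finally show ?thesis by (simp add: w_def)
    qed
    show ?thesis
    proof (intro exI[of _ \<alpha>] conjI)
      from b(1) obtain k where "k \<in> K - {j}" "\<beta> k \<noteq> 0" by auto
      then show "\<exists>k\<in>K. \<alpha> k \<noteq> 0" using j by (intro bexI[of _ k]) (auto simp: \<alpha>_def c_def)
      show "\<forall>l\<in>insert i I. (\<Sum>k\<in>K. \<alpha> k * v k l) = 0"
      proof
        fix l assume l: "l \<in> insert i I"
        show "(\<Sum>k\<in>K. \<alpha> k * v k l) = 0"
        proof (cases "l = i")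
          case True
          then show ?thesis using key[of l] by (simp add: w_def c_def)
        next
          case False
          then show ?thesis using key[of l] l b(2) by auto
        qed
      qed
    qed
  qed
qed



type_synonym 'n cm = "complex^'n^'n"

lemma matrix_add_rdistrib': "((A::'a::semiring_1^'n^'m) + B) ** C = A ** C + B ** C"
  by (vector matrix_matrix_mult_def sum.distrib[symmetric] field_simps)

lemma matrix_diff_rdistrib': "((A::'a::ring_1^'n^'m) - B) ** C = A ** C - B ** C"
  by (vector matrix_matrix_mult_def sum_subtractf[symmetric] field_simps)

lemma matrix_diff_ldistrib': "(C::'a::ring_1^'n^'m) ** (A - B) = C ** A - C ** B"
  by (vector matrix_matrix_mult_def sum_subtractf[symmetric] field_simps)

lemma matrix_neg_left': "(- (A::'a::ring_1^'n^'m)) ** B = - (A ** B)"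
  by (vector matrix_matrix_mult_def sum_negf[symmetric])

lemma matrix_neg_right': "(A::'a::ring_1^'n^'m) ** (- B) = - (A ** B)"
  by (vector matrix_matrix_mult_def sum_negf[symmetric])

lemma cmat_scale_nth [simp]: "(c \<odot> A) $ i $ j = c * A $ i $ j"
  by (simp add: cmat_scale_def)

lemma cmat_scale_mult_left: "(c \<odot> A) ** B = c \<odot> (A ** B)"
  by (simp add: vec_eq_iff matrix_matrix_mult_def sum_distrib_left mult.assoc)

lemma cmat_scale_mult_right: "A ** (c \<odot> B) = c \<odot> (A ** B)"
  by (simp add: vec_eq_iff matrix_matrix_mult_def sum_distrib_left algebra_simps)

lemma trace_cmat_scale: "trace (c \<odot> A) = c * trace A"
  by (simp add: trace_def sum_distrib_left)

lemma cmat_scale_add: "c \<odot> (A + B) = c \<odot> A + c \<odot> B"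
  by (simp add: vec_eq_iff algebra_simps)

lemma cmat_scale_zero [simp]: "c \<odot> 0 = 0"
  by (simp add: vec_eq_iff)

lemma matrix_inv_props:
  assumes "invertible (A::'a::semiring_1^'n^'n)"
  shows "A ** matrix_inv A = mat 1" "matrix_inv A ** A = mat 1"
proof -
  have "\<exists>A'. A ** A' = mat 1 \<and> A' ** A = mat 1" using assms by (simp add: invertible_def)
  then have "A ** matrix_inv A = mat 1 \<and> matrix_inv A ** A = mat 1"
    unfolding matrix_inv_def by (rule someI_ex)
  then show "A ** matrix_inv A = mat 1" "matrix_inv A ** A = mat 1" by auto
qed

lemma trace_linear_sum:
  fixes A B C :: "complex^'n^'n"
  assumes "finite K"
  shows "trace (A ** (B ** ((\<Sum>k\<in>K. c k \<odot> X k) ** C))) = (\<Sum>k\<in>K. c k * trace (A ** (B ** (X k ** C))))"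
  using assms
proof (induction K rule: finite_induct)
  case empty then show ?case by (simp add: trace_def)
next
  case (insert k K)
  then show ?case
    by (simp add: matrix_add_rdistrib' matrix_add_ldistrib trace_add cmat_scale_mult_left
        cmat_scale_mult_right trace_cmat_scale)
qed

text \<open>Adjoint invariance\<close>

lemma conj_pow:
  fixes P Q X :: "'a::semiring_1^'n^'n"
  assumes "P ** Q = mat 1" "Q ** P = mat 1"
  shows "(((**) (P ** X ** Q)) ^^ k) (mat 1) = P ** ((((**) X) ^^ k) (mat 1)) ** Q"
proof (induction k)
  case 0 then show ?case using assms by simp
next
  case (Suc k)
  have "P ** X ** Q ** (P ** (((**) X ^^ k) (mat 1)) ** Q)
      = P ** X ** (Q ** P) ** (((**) X ^^ k) (mat 1)) ** Q"
    by (simp add: matrix_mul_assoc)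
  also have "\<dots> = P ** (X ** (((**) X ^^ k) (mat 1))) ** Q"
    using assms by (simp add: matrix_mul_assoc)
  finally show ?case using Suc by simp
qed

lemma conj_bounded_linear:
  fixes P Q :: "complex^'n^'n"
  shows "bounded_linear (\<lambda>X. P ** X ** Q)"
proof -
  have "linear (\<lambda>X. P ** X ** Q)"
    by (rule linearI) (simp_all add: matrix_add_ldistrib matrix_add_rdistrib' scalar_matrix_assoc matrix_scalar_ac)
  then show ?thesis by (simp add: linear_conv_bounded_linear)
qed

lemma ad_invariant:
  assumes G: "complex_linear_lie_group G g" and P: "P \<in> G" and A: "A \<in> g"
  shows "P ** A ** matrix_inv P \<in> g"
proof -
  let ?Q = "matrix_inv P"
  have inv: "invertible P" using G P unfolding complex_linear_lie_group_def by auto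
  note PQ = matrix_inv_props[OF inv]
  have QG: "?Q \<in> G" using G P unfolding complex_linear_lie_group_def by auto
  have GG: "\<And>X Y. X \<in> G \<Longrightarrow> Y \<in> G \<Longrightarrow> X ** Y \<in> G" using G unfolding complex_linear_lie_group_def by auto
  have gdef: "g = {A. \<forall>t::real. mexp (t *\<^sub>R A) \<in> G}" using G unfolding complex_linear_lie_group_def by auto
  have "mexp (t *\<^sub>R (P ** A ** ?Q)) \<in> G" for t :: real
  proof -
    define f where "f n = (1 / fact n) \<odot> (((**) (t *\<^sub>R A)) ^^ n) (mat 1)" for n
    define L where "L X = P ** X ** ?Q" for X
    define L' where "L' X = ?Q ** X ** P" for X
    have tA: "t *\<^sub>R (P ** A ** ?Q) = P ** (t *\<^sub>R A) ** ?Q"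
      by (simp add: scalar_matrix_assoc matrix_scalar_ac)
    have fL: "(1 / fact n) \<odot> (((**) (t *\<^sub>R (P ** A ** ?Q))) ^^ n) (mat 1) = L (f n)" for n
      unfolding tA conj_pow[OF PQ] L_def f_def
      by (simp add: cmat_scale_mult_left cmat_scale_mult_right)
    have m1: "mexp (t *\<^sub>R (P ** A ** ?Q)) = suminf (\<lambda>n. L (f n))"
      unfolding mexp_def fL ..
    have m2: "mexp (t *\<^sub>R A) = suminf f" unfolding mexp_def f_def ..
    have e: "mexp (t *\<^sub>R A) \<in> G" using A gdef by auto
    have LL: "L' (L X) = X" for X
      using PQ by (simp add: L_def L'_def matrix_mul_assoc) (metis matrix_mul_assoc matrix_mul_rid)
    show ?thesis
    proof (cases "summable f")
      case True
      then have "(\<lambda>n. L (f n)) sums L (suminf f)"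
        unfolding L_def by (intro bounded_linear.sums[OF conj_bounded_linear]) (simp add: summable_sums)
      then have "mexp (t *\<^sub>R (P ** A ** ?Q)) = L (mexp (t *\<^sub>R A))"
        using m1 m2 sums_unique by metis
      then show ?thesis using e P QG GG by (simp add: L_def)
    next
      case False
      have "\<not> summable (\<lambda>n. L (f n))"
      proof
        assume "summable (\<lambda>n. L (f n))"
        then have "(\<lambda>n. L' (L (f n))) sums L' (suminf (\<lambda>n. L (f n)))"
          unfolding L'_def by (intro bounded_linear.sums[OF conj_bounded_linear]) (simp add: summable_sums)
        then have "summable f" using LL by (auto simp: summable_def)
        then show False using False by simp
      qed
      then have "(\<lambda>s. (\<lambda>n. L (f n)) sums s) = (\<lambda>s. f sums s)"
        using False by (auto simp: summable_def)
      then have "suminf (\<lambda>n. L (f n)) = suminf f" by (simp add: suminf_def)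
      then show ?thesis using m1 m2 e by simp
    qed
  qed
  then show ?thesis using gdef by auto
qed



definition mder :: "(complex \<Rightarrow> complex^'n^'n) \<Rightarrow> complex^'n^'n \<Rightarrow> complex \<Rightarrow> bool" where
  "mder F F' y \<longleftrightarrow> (\<forall>i j. ((\<lambda>z. F z $ i $ j) has_field_derivative F' $ i $ j) (at y))"

lemma mder_mult:
  assumes "mder F F' y" "mder G G' y"
  shows "mder (\<lambda>z. F z ** G z) (F' ** G y + F y ** G') y"
  unfolding mder_def
proof (intro allI)
  fix i j
  have "((\<lambda>z. \<Sum>k\<in>UNIV. F z $ i $ k * G z $ k $ j) has_field_derivative
        (\<Sum>k\<in>UNIV. F' $ i $ k * G y $ k $ j + F y $ i $ k * G' $ k $ j)) (at y)"
    apply (rule DERIV_sum)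
    using assms unfolding mder_def
    by (auto intro!: derivative_eq_intros)
  then show "((\<lambda>z. (F z ** G z) $ i $ j) has_field_derivative (F' ** G y + F y ** G') $ i $ j) (at y)"
    by (simp add: matrix_matrix_mult_def sum.distrib)
qed

lemma mder_trace:
  assumes "mder F F' y"
  shows "((\<lambda>z. trace (A ** F z)) has_field_derivative trace (A ** F')) (at y)"
proof -
  have "((\<lambda>z. \<Sum>i\<in>UNIV. \<Sum>k\<in>UNIV. A $ i $ k * F z $ k $ i) has_field_derivative
        (\<Sum>i\<in>UNIV. \<Sum>k\<in>UNIV. A $ i $ k * F' $ k $ i)) (at y)"
    apply (intro DERIV_sum)
    using assms unfolding mder_def
    by (auto intro!: derivative_eq_intros)
  then show ?thesis by (simp add: trace_def matrix_matrix_mult_def)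
qed

lemma mder_transform:
  assumes "mder F F' y" "open S" "y \<in> S" "\<And>z. z \<in> S \<Longrightarrow> F z = G z"
  shows "mder G F' y"
  unfolding mder_def
proof (intro allI)
  fix i j
  show "((\<lambda>z. G z $ i $ j) has_field_derivative F' $ i $ j) (at y)"
    by (rule has_field_derivative_transform_within_open[of "\<lambda>z. F z $ i $ j" _ _ S])
       (use assms in \<open>auto simp: mder_def\<close>)
qed

lemma det_holomorphic:
  assumes "\<And>i j. (\<lambda>y. F y $ i $ j) holomorphic_on U"
  shows "(\<lambda>y. det (F y :: complex^'n^'n)) holomorphic_on U"
  unfolding det_def
  by (intro holomorphic_on_sum holomorphic_on_mult holomorphic_on_prod holomorphic_on_const assms)

lemma matrix_inv_cramer:
  fixes A :: "complex^'n^'n"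
  assumes "invertible A"
  shows "matrix_inv A $ k $ j = det (\<chi> i l. if l = k then (if i = j then 1 else 0) else A $ i $ l) / det A"
proof -
  note PQ = matrix_inv_props[OF assms]
  let ?b = "(\<chi> i. if i = j then 1 else 0) :: complex^'n"
  let ?x = "matrix_inv A *v ?b"
  have d0: "det A \<noteq> 0" using assms by (simp add: invertible_det_nz)
  have "A *v ?x = ?b" by (simp add: matrix_vector_mul_assoc PQ)
  then have "?x = (\<chi> k. det(\<chi> i l. if l = k then ?b $ i else A $ i $ l) / det A)"
    using cramer[OF d0] by blast
  then have "?x $ k = det(\<chi> i l. if l = k then ?b $ i else A $ i $ l) / det A" by simp
  moreover have "?x $ k = matrix_inv A $ k $ j"
    unfolding matrix_vector_mult_def by (simp add: if_distrib[of "times _"] cong: if_cong)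
  moreover have "(\<chi> i l. if l = k then ?b $ i else A $ i $ l) = (\<chi> i l. if l = k then (if i = j then 1 else 0) else A $ i $ l)"
    by (simp add: vec_eq_iff)
  ultimately show ?thesis by simp
qed

lemma hol_if: "f holomorphic_on U \<Longrightarrow> (\<lambda>z. if c then a else f z) holomorphic_on U"
  by (cases c) auto

lemma inv_holomorphic:
  fixes \<Psi> :: "complex \<Rightarrow> complex^'n^'n"
  assumes "\<And>i j. (\<lambda>y. \<Psi> y $ i $ j) holomorphic_on U" "\<And>y. y \<in> U \<Longrightarrow> invertible (\<Psi> y)"
  shows "(\<lambda>y. matrix_inv (\<Psi> y) $ k $ j) holomorphic_on U"
proof -
  have "(\<lambda>y. det (\<chi> i l. if l = k then (if i = j then 1 else 0) else \<Psi> y $ i $ l) / det (\<Psi> y)) holomorphic_on U"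
    apply (intro holomorphic_on_divide det_holomorphic)
    using assms by (auto simp: invertible_det_nz intro!: hol_if)
  then show ?thesis
    by (rule holomorphic_transform) (use assms in \<open>simp add: matrix_inv_cramer\<close>)
qed

lemma ratfun_deriv:
  fixes p d :: "complex poly"
  assumes "open S" "y \<in> S" "\<And>z. z \<in> S \<Longrightarrow> poly d z \<noteq> 0"
    and "\<And>z. z \<in> S \<Longrightarrow> f z = poly p z / poly d z ^ e"
  shows "(f has_field_derivative poly (pderiv p * d - of_nat e * p * pderiv d) y / poly d y ^ (e+1)) (at y)"
proof -
  have dy: "poly d y \<noteq> 0" using assms by auto
  have "((\<lambda>z. poly p z / poly d z ^ e) has_field_derivative
        (poly (pderiv p) y * poly d y ^ e - poly p y * (of_nat e * poly (pderiv d) y * poly d y ^ (e - 1))) / (poly d y ^ e * poly d y ^ e)) (at y)"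
    by (intro DERIV_divide poly_DERIV) (use dy DERIV_power[OF poly_DERIV[of d y], of e] in \<open>auto simp: mult.assoc\<close>)
  moreover have "(poly (pderiv p) y * poly d y ^ e - poly p y * (of_nat e * poly (pderiv d) y * poly d y ^ (e - 1))) / (poly d y ^ e * poly d y ^ e)
     = poly (pderiv p * d - of_nat e * p * pderiv d) y / poly d y ^ (e+1)"
  proof (cases e)
    case 0 then show ?thesis using dy by (simp add: field_simps)
  next
    case (Suc e')
    then show ?thesis using dy by (simp add: field_simps power_add)
  qed
  ultimately show ?thesis
    using assms by (auto intro: has_field_derivative_transform_within_open)
qed



definition Eu :: "'n \<Rightarrow> 'n \<Rightarrow> complex^'n^'n" where
  "Eu i j = (\<chi> k l. if k = i \<and> l = j then 1 else 0)"

lemma decomp: "A = (\<Sum>i\<in>UNIV. \<Sum>j\<in>UNIV. A $ i $ j \<odot> Eu i j)"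
proof -
  have "(\<Sum>i\<in>UNIV. \<Sum>j\<in>UNIV. A $ i $ j \<odot> Eu i j) $ k $ l = A $ k $ l" for k l
    apply (simp add: sum_component Eu_def if_distrib[of "times _"] if_if_eq_conj[symmetric] cong: if_cong)
    apply (subst sum.swap)
    apply simp
    done
  then show ?thesis by (simp add: vec_eq_iff)
qed

lemma coords:
  fixes g :: "(complex^'n^'n) set"
  assumes sub: "csubspace g"
  obtains B C and lc :: "complex^'n^'n \<Rightarrow> 'n \<Rightarrow> 'n \<Rightarrow> complex" where "finite B" "B \<subseteq> C" "card B = cdim g"
   "\<And>A b. A \<in> g \<Longrightarrow> b \<in> C - B \<Longrightarrow> (\<Sum>i\<in>UNIV. \<Sum>j\<in>UNIV. A$i$j * lc b i j) = 0"
   "\<And>A. (\<And>b. b \<in> C - B \<Longrightarrow> (\<Sum>i\<in>UNIV. \<Sum>j\<in>UNIV. A$i$j * lc b i j) = 0) \<Longrightarrow> A \<in> g"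
   "\<And>A. (\<And>b. b \<in> C \<Longrightarrow> (\<Sum>i\<in>UNIV. \<Sum>j\<in>UNIV. A$i$j * lc b i j) = 0) \<Longrightarrow> A = 0"
proof -
  interpret V: vector_space "cmat_scale :: complex \<Rightarrow> complex^'n^'n \<Rightarrow> complex^'n^'n"
    by (rule vector_space_cmat_scale)
  have sub': "V.subspace g" using sub by (simp add: csubspace_def)
  define E :: "(complex^'n^'n) set" where "E = (\<lambda>(i,j). Eu i j) ` UNIV"
  have finE: "finite E" unfolding E_def by simp
  have spanE: "V.span E = UNIV"
  proof (intro set_eqI iffI)
    fix A :: "complex^'n^'n"
    have "(\<Sum>i\<in>UNIV. \<Sum>j\<in>UNIV. A $ i $ j \<odot> Eu i j) \<in> V.span E"
      by (intro V.span_sum V.span_scale V.span_base) (auto simp: E_def)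
    then show "A \<in> V.span E" using decomp[of A] by simp
  qed simp
  obtain B where B: "B \<subseteq> g" "V.independent B" "g \<subseteq> V.span B" "card B = V.dim g"
    by (rule V.basis_exists)
  have finB: "finite B" using V.independent_span_bound[OF finE B(2)] spanE by auto
  have spanB: "V.span B = g" using V.span_subspace[OF B(1) B(3) sub'] .
  define C where "C = V.extend_basis B"
  have C: "B \<subseteq> C" "V.independent C" "V.span C = UNIV"
    using V.extend_basis_superset[OF B(2)] V.independent_extend_basis[OF B(2)] V.span_extend_basis[OF B(2)]
    by (auto simp: C_def)
  define lc where "lc b i j = V.representation C (Eu i j) b" for b i j
  have rep: "V.representation C A b = (\<Sum>i\<in>UNIV. \<Sum>j\<in>UNIV. A$i$j * lc b i j)" for A b
  proof -
    have "V.representation C A b = V.representation C (\<Sum>i\<in>UNIV. \<Sum>j\<in>UNIV. A $ i $ j \<odot> Eu i j) b"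
      using decomp[of A] by simp
    also have "\<dots> = (\<Sum>i\<in>UNIV. \<Sum>j\<in>UNIV. A$i$j * lc b i j)"
      using C by (simp add: V.representation_sum V.representation_scale lc_def)
    finally show ?thesis .
  qed
  show ?thesis
  proof (rule that[of B C lc])
    show "finite B" by fact
    show "B \<subseteq> C" by fact
    show "card B = cdim g" using B by (simp add: cdim_def)
    show "(\<Sum>i\<in>UNIV. \<Sum>j\<in>UNIV. A$i$j * lc b i j) = 0" if "A \<in> g" "b \<in> C - B" for A b
    proof -
      have "V.representation C A = V.representation B A"
        using V.representation_extend[OF C(2) _ C(1)] that spanB by auto
      then have "V.representation C A b = 0" using V.representation_ne_zero[of B A b] that by auto
      then show ?thesis using rep by simp
    qed
    show "A \<in> g" if h: "\<And>b. b \<in> C - B \<Longrightarrow> (\<Sum>i\<in>UNIV. \<Sum>j\<in>UNIV. A$i$j * lc b i j) = 0" for A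
    proof -
      have sub1: "{b. V.representation C A b \<noteq> 0} \<subseteq> B"
        using h rep V.representation_ne_zero[of C A] by auto
      have "A = (\<Sum>b | V.representation C A b \<noteq> 0. V.representation C A b \<odot> b)"
        using V.sum_nonzero_representation_eq[OF C(2)] C(3) by simp
      also have "\<dots> \<in> V.span B"
        using sub1 by (intro V.span_sum V.span_scale V.span_base) auto
      finally show ?thesis using spanB by simp
    qed
    show "A = 0" if h: "\<And>b. b \<in> C \<Longrightarrow> (\<Sum>i\<in>UNIV. \<Sum>j\<in>UNIV. A$i$j * lc b i j) = 0" for A
    proof -
      have e: "{b. V.representation C A b \<noteq> 0} = {}"
        using h rep V.representation_ne_zero[of C A] by auto
      have "A = (\<Sum>b | V.representation C A b \<noteq> 0. V.representation C A b \<odot> b)"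
        using V.sum_nonzero_representation_eq[OF C(2)] C(3) by simp
      then show ?thesis unfolding e by simp
    qed
  qed
qed



lemma rat_mder:
  assumes S: "open S" "y \<in> S" and d: "\<And>z. z \<in> S \<Longrightarrow> poly d z \<noteq> 0"
    and N: "\<And>z i j. z \<in> S \<Longrightarrow> F z $ i $ j = poly (N i j) z / poly d z ^ e"
  shows "mder F (mderiv F y) y"
    and "\<And>i j. mderiv F y $ i $ j = poly (pderiv (N i j) * d - of_nat e * N i j * pderiv d) y / poly d y ^ (e+1)"
proof -
  have h: "((\<lambda>z. F z $ i $ j) has_field_derivative poly (pderiv (N i j) * d - of_nat e * N i j * pderiv d) y / poly d y ^ (e+1)) (at y)" for i j
    by (rule ratfun_deriv[OF S d]) (use N in auto)
  show "mderiv F y $ i $ j = poly (pderiv (N i j) * d - of_nat e * N i j * pderiv d) y / poly d y ^ (e+1)" for i j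
    using DERIV_imp_deriv[OF h[of i j]] by (simp add: mderiv_def)
  then show "mder F (mderiv F y) y" using h by (simp add: mder_def)
qed

lemma Dk_rational:
  fixes D \<Psi> :: "complex \<Rightarrow> complex^'n^'n"
  assumes S: "open S" and d: "\<And>z. z \<in> S \<Longrightarrow> poly d z \<noteq> 0"
   and R: "\<And>z i j. z \<in> S \<Longrightarrow> D z $ i $ j = poly (R i j) z / poly d z"
   and N0: "\<And>z i j. z \<in> S \<Longrightarrow> Dk \<Psi> D x2 E2 0 z $ i $ j = poly (N0 i j) z / poly d z ^ 2"
  shows "\<exists>N. \<forall>z\<in>S. \<forall>i j. Dk \<Psi> D x2 E2 k z $ i $ j = poly (N i j) z / poly d z ^ (k+2)"
proof (induction k)
  case 0 then show ?case using N0 by (intro exI[of _ N0]) (simp add: power2_eq_square)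
next
  case (Suc k)
  then obtain N where N: "\<And>z i j. z \<in> S \<Longrightarrow> Dk \<Psi> D x2 E2 k z $ i $ j = poly (N i j) z / poly d z ^ (k+2)"
    by blast
  define N' where "N' i j = pderiv (N i j) * d - of_nat (k+2) * N i j * pderiv d
      + (\<Sum>l\<in>UNIV. N i l * R l j - R i l * N l j)" for i j
  have "Dk \<Psi> D x2 E2 (Suc k) z $ i $ j = poly (N' i j) z / poly d z ^ (Suc k + 2)" if z: "z \<in> S" for z i j
  proof -
    have dz: "poly d z \<noteq> 0" using d z by auto
    have m: "mderiv (Dk \<Psi> D x2 E2 k) z $ i $ j = poly (pderiv (N i j) * d - of_nat (k+2) * N i j * pderiv d) z / poly d z ^ (k+2+1)"
      by (rule rat_mder(2)[OF S z d N])
    have b: "mbracket (Dk \<Psi> D x2 E2 k z) (D z) $ i $ j = poly (\<Sum>l\<in>UNIV. N i l * R l j - R i l * N l j) z / poly d z ^ (k+2+1)"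
    proof -
      have "mbracket (Dk \<Psi> D x2 E2 k z) (D z) $ i $ j
          = (\<Sum>l\<in>UNIV. poly (N i l) z / poly d z ^ (k+2) * (poly (R l j) z / poly d z)
                     - poly (R i l) z / poly d z * (poly (N l j) z / poly d z ^ (k+2)))"
        by (simp add: mbracket_def matrix_matrix_mult_def N[OF z] R[OF z] sum_subtractf)
      also have "\<dots> = (\<Sum>l\<in>UNIV. (poly (N i l) z * poly (R l j) z - poly (R i l) z * poly (N l j) z) / poly d z ^ (k+2+1))"
        using dz by (intro sum.cong refl) (simp add: field_simps)
      also have "\<dots> = poly (\<Sum>l\<in>UNIV. N i l * R l j - R i l * N l j) z / poly d z ^ (k+2+1)"
        by (simp add: sum_divide_distrib poly_sum)
      finally show ?thesis .
    qed
    show ?thesis using m b by (simp add: N'_def add_divide_distrib)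
  qed
  then show ?case by blast
qed



lemma Lf_sum:
  fixes X :: "'k \<Rightarrow> complex^'n^'n"
  shows "(\<Sum>i\<in>UNIV. \<Sum>j\<in>UNIV. (\<Sum>k\<in>K. c k \<odot> X k) $ i $ j * lc i j)
       = (\<Sum>k\<in>K. c k * (\<Sum>i\<in>UNIV. \<Sum>j\<in>UNIV. X k $ i $ j * lc i j))"
proof -
  have "(\<Sum>i\<in>UNIV. \<Sum>j\<in>UNIV. (\<Sum>k\<in>K. c k \<odot> X k) $ i $ j * lc i j)
      = (\<Sum>i\<in>UNIV. \<Sum>j\<in>UNIV. \<Sum>k\<in>K. c k * (X k $ i $ j * lc i j))"
    by (simp add: sum_component sum_distrib_right mult.assoc)
  also have "\<dots> = (\<Sum>i\<in>UNIV. \<Sum>k\<in>K. \<Sum>j\<in>UNIV. c k * (X k $ i $ j * lc i j))"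
    by (intro sum.cong refl) (rule sum.swap)
  also have "\<dots> = (\<Sum>k\<in>K. \<Sum>i\<in>UNIV. \<Sum>j\<in>UNIV. c k * (X k $ i $ j * lc i j))"
    by (rule sum.swap)
  also have "\<dots> = (\<Sum>k\<in>K. c k * (\<Sum>i\<in>UNIV. \<Sum>j\<in>UNIV. X k $ i $ j * lc i j))"
    by (simp add: sum_distrib_left)
  finally show ?thesis .
qed

lemma Lf_deriv:
  assumes "mder F F' y"
  shows "((\<lambda>z. \<Sum>i\<in>UNIV. \<Sum>j\<in>UNIV. F z $ i $ j * lc i j) has_field_derivative
          (\<Sum>i\<in>UNIV. \<Sum>j\<in>UNIV. F' $ i $ j * lc i j)) (at y)"
  using assms unfolding mder_def
  by (intro DERIV_sum) (auto intro!: derivative_eq_intros)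

lemma csub_props:
  assumes "csubspace g"
  shows "0 \<in> g" "\<And>x y. x \<in> g \<Longrightarrow> y \<in> g \<Longrightarrow> x + y \<in> g" "\<And>c x. x \<in> g \<Longrightarrow> c \<odot> x \<in> g"
  using assms unfolding csubspace_def module.subspace_def[OF vector_space_cmat_scale[unfolded module_iff_vector_space[symmetric]]]
  by auto

lemma csub_sum:
  assumes "csubspace g" "finite K" "\<And>k. k \<in> K \<Longrightarrow> X k \<in> g"
  shows "(\<Sum>k\<in>K. c k \<odot> X k) \<in> g"
  using assms(2,3)
  by (induction K rule: finite_induct) (auto intro: csub_props[OF assms(1)])



theorem mainTheorem2:
  fixes G g :: "(complex^'n^'n) set"
    and D \<Psi> :: "complex \<Rightarrow> complex^'n^'n"
    and U :: "complex set"
    and x2 :: complex and E1 E2 :: "complex^'n^'n"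
  assumes G: "complex_reductive_lie_group G g"
    and Dg: "\<forall>x\<in>U. D x \<in> g"
    and Drat: "rational_matrix_no_poles_on D U"
    and U: "open U" "connected U" "simply_connected U"
    and Psi: "fundamental_solution \<Psi> D G U"
    and x2: "x2 \<in> U" and E2: "E2 \<in> g" and E1: "E1 \<in> g"
  shows "\<exists>\<alpha> :: nat \<Rightarrow> complex poly.
           (\<exists>k\<le>cdim g. \<alpha> k \<noteq> 0) \<and>
           (\<forall>x1\<in>U - {x2}. (\<Sum>k\<le>cdim g. poly (\<alpha> k) x1 \<odot> Dk \<Psi> D x2 E2 k x1) = 0) \<and>
           (\<forall>x1\<in>U - {x2}. (\<Sum>k\<le>cdim g. poly (\<alpha> k) x1 *
               (deriv ^^ k) (\<lambda>y. W2 \<Psi> y E1 x2 E2) x1) = 0)"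
proof -
  have Gl: "complex_linear_lie_group G g" and red: "reductive_lie_algebra g"
    using G by (auto simp: complex_reductive_lie_group_def)
  have csub: "csubspace g" using red by (simp add: reductive_lie_algebra_def)
  have brk: "\<And>A B. A \<in> g \<Longrightarrow> B \<in> g \<Longrightarrow> mbracket A B \<in> g"
    using red by (simp add: reductive_lie_algebra_def)
  have Ginv: "\<And>A. A \<in> G \<Longrightarrow> invertible A" using Gl by (auto simp: complex_linear_lie_group_def)
  have Psihol: "\<And>i j. (\<lambda>x. \<Psi> x $ i $ j) holomorphic_on U"
    and PsiG: "\<And>x. x \<in> U \<Longrightarrow> \<Psi> x \<in> G"
    and Psider: "\<And>x. x \<in> U \<Longrightarrow> mder \<Psi> (D x ** \<Psi> x) x"
    using Psi by (auto simp: fundamental_solution_def mder_def)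
  obtain P Q where PQ: "\<And>i j. Q i j \<noteq> 0" "\<And>i j x. D x $ i $ j = poly (P i j) x / poly (Q i j) x"
    "\<And>i j x. x \<in> U \<Longrightarrow> poly (Q i j) x \<noteq> 0"
    using Drat unfolding rational_matrix_no_poles_on_def by metis
  define S where "S = U - {x2}"
  have S: "open S" using U(1) by (simp add: S_def open_delete)
  have SU: "S \<subseteq> U" by (auto simp: S_def)
  define Q' where "Q' = (\<lambda>(i,j). Q i j)"
  define q where "q = (\<Prod>p\<in>UNIV. Q' p)"
  define d where "d = [:-x2, 1:] * q"
  have polyq: "poly q z = poly (Q i j) z * poly (\<Prod>p\<in>UNIV - {(i,j)}. Q' p) z" for z i j
  proof -
    have "q = Q' (i,j) * (\<Prod>p\<in>UNIV - {(i,j)}. Q' p)"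
      unfolding q_def by (simp add: prod.remove)
    then show ?thesis by (simp add: Q'_def)
  qed
  have qnz: "poly q z \<noteq> 0" if "z \<in> U" for z
    using PQ(3) that by (auto simp: q_def poly_prod Q'_def)
  have dnz: "poly d z \<noteq> 0" if "z \<in> S" for z
    using that qnz SU by (auto simp: d_def S_def)
  define R where "R i j = [:-x2, 1:] * P i j * (\<Prod>p\<in>UNIV - {(i,j)}. Q' p)" for i j
  have Rrep: "D z $ i $ j = poly (R i j) z / poly d z" if "z \<in> S" for z i j
  proof -
    have "z - x2 \<noteq> 0" "poly (\<Prod>p\<in>UNIV - {(i,j)}. Q' p) z \<noteq> 0"
      using that qnz[of z] SU polyq[of z i j] by (auto simp: S_def)
    then have c: "(z - x2) * poly (\<Prod>p\<in>UNIV - {(i,j)}. Q' p) z \<noteq> 0" by simp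
    have r1: "poly (R i j) z = ((z - x2) * poly (\<Prod>p\<in>UNIV - {(i,j)}. Q' p) z) * poly (P i j) z"
      by (simp add: R_def algebra_simps)
    have r2: "poly d z = ((z - x2) * poly (\<Prod>p\<in>UNIV - {(i,j)}. Q' p) z) * poly (Q i j) z"
      by (simp add: d_def polyq[of z i j] algebra_simps)
    have "poly (R i j) z / poly d z = ((z - x2) * poly (\<Prod>p\<in>UNIV - {(i,j)}. Q' p) z * poly (P i j) z)
        / ((z - x2) * poly (\<Prod>p\<in>UNIV - {(i,j)}. Q' p) z * poly (Q i j) z)"
      by (simp only: r1 r2)
    also have "\<dots> = poly (P i j) z / poly (Q i j) z"
      by (rule mult_divide_mult_cancel_left[OF c])
    finally show ?thesis by (simp add: PQ(2))
  qed
  define M2 where "M2 = Mconj \<Psi> x2 E2"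
  define N0 where "N0 i j = smult (M2 $ i $ j) (q ^ 2)" for i j
  have N0rep: "Dk \<Psi> D x2 E2 0 z $ i $ j = poly (N0 i j) z / poly d z ^ 2" if "z \<in> S" for z i j
  proof -
    have "poly q z \<noteq> 0" "z - x2 \<noteq> 0" using qnz that SU by (auto simp: S_def)
    moreover have "poly d z ^ 2 = (z - x2)^2 * poly q z ^ 2" by (simp add: d_def algebra_simps power2_eq_square)
    moreover have "poly (N0 i j) z = M2 $ i $ j * poly q z ^ 2" by (simp add: N0_def)
    moreover have "Dk \<Psi> D x2 E2 0 z $ i $ j = M2 $ i $ j / (z - x2)^2" by (simp add: M2_def)
    ultimately show ?thesis by (simp add: field_simps)
  qed
  have "\<forall>k. \<exists>N. \<forall>z\<in>S. \<forall>i j. Dk \<Psi> D x2 E2 k z $ i $ j = poly (N i j) z / poly d z ^ (k+2)"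
    using Dk_rational[OF S dnz Rrep N0rep] by blast
  from choice[OF this] obtain NN where
    "\<forall>k. \<forall>z\<in>S. \<forall>i j. Dk \<Psi> D x2 E2 k z $ i $ j = poly (NN k i j) z / poly d z ^ (k+2)"
    by blast
  then have NN: "\<And>k z i j. z \<in> S \<Longrightarrow> Dk \<Psi> D x2 E2 k z $ i $ j = poly (NN k i j) z / poly d z ^ (k+2)"
    by blast
  have Dkder: "mder (Dk \<Psi> D x2 E2 k) (mderiv (Dk \<Psi> D x2 E2 k) z) z" if "z \<in> S" for k z
    by (rule rat_mder(1)[OF S that dnz NN])
  have M2g: "M2 \<in> g" unfolding M2_def Mconj_def
    by (rule ad_invariant[OF Gl PsiG[OF x2] E2])
  obtain B C and lc :: "complex^'n^'n \<Rightarrow> 'n \<Rightarrow> 'n \<Rightarrow> complex" where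
    co: "finite B" "B \<subseteq> C" "card B = cdim g"
   "\<And>A b. A \<in> g \<Longrightarrow> b \<in> C - B \<Longrightarrow> (\<Sum>i\<in>UNIV. \<Sum>j\<in>UNIV. A$i$j * lc b i j) = 0"
   "\<And>A. (\<And>b. b \<in> C - B \<Longrightarrow> (\<Sum>i\<in>UNIV. \<Sum>j\<in>UNIV. A$i$j * lc b i j) = 0) \<Longrightarrow> A \<in> g"
   "\<And>A. (\<And>b. b \<in> C \<Longrightarrow> (\<Sum>i\<in>UNIV. \<Sum>j\<in>UNIV. A$i$j * lc b i j) = 0) \<Longrightarrow> A = 0"
    using coords[OF csub] by blast
  define Lf where "Lf b A = (\<Sum>i\<in>UNIV. \<Sum>j\<in>UNIV. A$i$j * lc b i j)" for b A
  have Dking: "\<forall>z\<in>S. Dk \<Psi> D x2 E2 k z \<in> g" for k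
  proof (induction k)
    case 0
    then show ?case using M2g csub_props(3)[OF csub] by (simp add: M2_def)
  next
    case (Suc k)
    show ?case
    proof
      fix z assume z: "z \<in> S"
      have "mderiv (Dk \<Psi> D x2 E2 k) z \<in> g"
      proof (rule co(5))
        fix b assume b: "b \<in> C - B"
        have h1: "((\<lambda>w. Lf b (Dk \<Psi> D x2 E2 k w)) has_field_derivative Lf b (mderiv (Dk \<Psi> D x2 E2 k) z)) (at z)"
          unfolding Lf_def by (rule Lf_deriv[OF Dkder[OF z]])
        have h2: "((\<lambda>w. Lf b (Dk \<Psi> D x2 E2 k w)) has_field_derivative 0) (at z)"
          by (rule has_field_derivative_transform_within_open[OF DERIV_const S z])
             (use Suc co(4)[OF _ b] in \<open>auto simp: Lf_def\<close>)
        show "(\<Sum>i\<in>UNIV. \<Sum>j\<in>UNIV. mderiv (Dk \<Psi> D x2 E2 k) z $ i $ j * lc b i j) = 0"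
          using DERIV_unique[OF h1 h2] by (simp add: Lf_def)
      qed
      moreover have "mbracket (Dk \<Psi> D x2 E2 k z) (D z) \<in> g"
        using brk Suc z Dg SU by auto
      ultimately show "Dk \<Psi> D x2 E2 (Suc k) z \<in> g"
        using csub_props(2)[OF csub] by simp
    qed
  qed
  define m where "m = cdim g"
  define a where "a k b = (\<Sum>i\<in>UNIV. \<Sum>j\<in>UNIV. smult (lc b i j) (NN k i j)) * d ^ (m - k)" for k b
  have arep: "Lf b (Dk \<Psi> D x2 E2 k z) = poly (a k b) z / poly d z ^ (m+2)" if "z \<in> S" "k \<le> m" for z k b
  proof -
    have dz: "poly d z \<noteq> 0" using dnz that by auto
    have "Lf b (Dk \<Psi> D x2 E2 k z) = (\<Sum>i\<in>UNIV. \<Sum>j\<in>UNIV. poly (NN k i j) z * lc b i j) / poly d z ^ (k+2)"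
      by (simp add: Lf_def NN[OF that(1)] sum_divide_distrib)
    also have "\<dots> = (\<Sum>i\<in>UNIV. \<Sum>j\<in>UNIV. poly (NN k i j) z * lc b i j) * poly d z ^ (m - k) / (poly d z ^ (k+2) * poly d z ^ (m - k))"
      using dz by simp
    also have "poly d z ^ (k+2) * poly d z ^ (m - k) = poly d z ^ (m+2)"
      using that(2) by (simp add: power_add[symmetric])
    finally show ?thesis by (simp add: a_def poly_sum mult.commute)
  qed
  have "card B < card {..m}" using co(3) by (simp add: m_def)
  from idom_dep[OF co(1) _ this, of a]
  obtain \<alpha> where al: "\<exists>k\<in>{..m}. \<alpha> k \<noteq> 0" "\<forall>b\<in>B. (\<Sum>k\<in>{..m}. \<alpha> k * a k b) = 0" by auto
  have sum0: "(\<Sum>k\<le>m. poly (\<alpha> k) z \<odot> Dk \<Psi> D x2 E2 k z) = 0" if z: "z \<in> S" for z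
  proof (rule co(6))
    fix b assume b: "b \<in> C"
    have Ls: "Lf b (\<Sum>k\<le>m. poly (\<alpha> k) z \<odot> Dk \<Psi> D x2 E2 k z) = (\<Sum>k\<le>m. poly (\<alpha> k) z * Lf b (Dk \<Psi> D x2 E2 k z))"
      unfolding Lf_def by (rule Lf_sum)
    have L0: "Lf b (\<Sum>k\<le>m. poly (\<alpha> k) z \<odot> Dk \<Psi> D x2 E2 k z) = 0"
    proof (cases "b \<in> B")
      case True
      have "(\<Sum>k\<le>m. poly (\<alpha> k) z * Lf b (Dk \<Psi> D x2 E2 k z)) = (\<Sum>k\<le>m. poly (\<alpha> k) z * (poly (a k b) z / poly d z ^ (m+2)))"
        using arep[OF z] by (intro sum.cong refl) auto
      also have "\<dots> = poly (\<Sum>k\<le>m. \<alpha> k * a k b) z / poly d z ^ (m+2)"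
        by (simp add: poly_sum sum_divide_distrib)
      also have "\<dots> = 0" using al(2) True by simp
      finally show ?thesis using Ls by simp
    next
      case False
      have "(\<Sum>k\<le>m. poly (\<alpha> k) z \<odot> Dk \<Psi> D x2 E2 k z) \<in> g"
        by (rule csub_sum[OF csub]) (use Dking z in auto)
      then show ?thesis unfolding Lf_def by (rule co(4)) (use b False in auto)
    qed
    then show "(\<Sum>i\<in>UNIV. \<Sum>j\<in>UNIV. (\<Sum>k\<le>m. poly (\<alpha> k) z \<odot> Dk \<Psi> D x2 E2 k z) $ i $ j * lc b i j) = 0"
      by (simp only: Lf_def)
  qed
  (* the W part *)
  define \<Phi> where "\<Phi> z = matrix_inv (\<Psi> z)" for z
  have inv1: "\<Psi> z ** \<Phi> z = mat 1" and inv2: "\<Phi> z ** \<Psi> z = mat 1" if "z \<in> U" for z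
    using matrix_inv_props[OF Ginv[OF PsiG[OF that]]] by (auto simp: \<Phi>_def)
  have Phider: "mder \<Phi> (- (\<Phi> z ** D z)) z" if z: "z \<in> U" for z
  proof -
    define \<Phi>' where "\<Phi>' = (\<chi> k j. deriv (\<lambda>w. \<Phi> w $ k $ j) z)"
    have "(\<lambda>w. \<Phi> w $ k $ j) holomorphic_on U" for k j
      unfolding \<Phi>_def by (rule inv_holomorphic[OF Psihol]) (use Ginv PsiG in auto)
    then have "(\<lambda>w. \<Phi> w $ k $ j) field_differentiable at z" for k j
      using holomorphic_on_imp_differentiable_at[OF _ U(1) z] by blast
    then have d1: "mder \<Phi> \<Phi>' z"
      unfolding mder_def \<Phi>'_def by (simp add: DERIV_deriv_iff_field_differentiable)
    have d2: "mder (\<lambda>w. \<Phi> w ** \<Psi> w) (\<Phi>' ** \<Psi> z + \<Phi> z ** (D z ** \<Psi> z)) z"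
      by (rule mder_mult[OF d1 Psider[OF z]])
    have d3: "mder (\<lambda>w. \<Phi> w ** \<Psi> w) 0 z"
      by (rule mder_transform[of "\<lambda>_. mat 1" _ _ U]) (use inv2 z U in \<open>auto simp: mder_def\<close>)
    have e: "\<Phi>' ** \<Psi> z + \<Phi> z ** (D z ** \<Psi> z) = 0"
    proof -
      have "(\<Phi>' ** \<Psi> z + \<Phi> z ** (D z ** \<Psi> z)) $ i $ j = 0 $ i $ j" for i j
      proof -
        from d2 have a: "((\<lambda>w. (\<Phi> w ** \<Psi> w) $ i $ j) has_field_derivative (\<Phi>' ** \<Psi> z + \<Phi> z ** (D z ** \<Psi> z)) $ i $ j) (at z)"
          unfolding mder_def by blast
        from d3 have b: "((\<lambda>w. (\<Phi> w ** \<Psi> w) $ i $ j) has_field_derivative 0 $ i $ j) (at z)"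
          unfolding mder_def by blast
        show ?thesis by (rule DERIV_unique[OF a b])
      qed
      then show ?thesis by (simp add: vec_eq_iff)
    qed
    have "\<Phi>' = (\<Phi>' ** \<Psi> z) ** \<Phi> z"
      using inv1[OF z] by (simp add: matrix_mul_assoc[symmetric])
    also have "\<dots> = - (\<Phi> z ** (D z ** \<Psi> z)) ** \<Phi> z"
    proof -
      have "\<Phi>' ** \<Psi> z = - (\<Phi> z ** (D z ** \<Psi> z))"
        using e by (simp add: eq_neg_iff_add_eq_0)
      then show ?thesis by (simp only:)
    qed
    also have "\<dots> = - (\<Phi> z ** D z)"
    proof -
      have "(\<Phi> z ** (D z ** \<Psi> z)) ** \<Phi> z = \<Phi> z ** (D z ** (\<Psi> z ** \<Phi> z))"
        by (simp only: matrix_mul_assoc)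
      then show ?thesis using inv1[OF z] by (simp only: matrix_neg_left' matrix_mul_rid)
    qed
    finally show ?thesis using d1 by simp
  qed
  define T where "T k z = \<Phi> z ** (Dk \<Psi> D x2 E2 k z ** \<Psi> z)" for k z
  have Tder: "mder (T k) (T (Suc k) z) z" if z: "z \<in> S" for k z
  proof -
    have zU: "z \<in> U" using z SU by auto
    let ?Dk = "Dk \<Psi> D x2 E2 k z" and ?Dk' = "mderiv (Dk \<Psi> D x2 E2 k) z"
    have "mder (\<lambda>w. \<Phi> w ** (Dk \<Psi> D x2 E2 k w ** \<Psi> w))
        (- (\<Phi> z ** D z) ** (?Dk ** \<Psi> z) + \<Phi> z ** (?Dk' ** \<Psi> z + ?Dk ** (D z ** \<Psi> z))) z"
      by (intro mder_mult Phider zU Dkder z Psider)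
    moreover have "- (\<Phi> z ** D z) ** (?Dk ** \<Psi> z) + \<Phi> z ** (?Dk' ** \<Psi> z + ?Dk ** (D z ** \<Psi> z))
        = T (Suc k) z"
      unfolding T_def Dk.simps mbracket_def
      by (simp only: matrix_add_ldistrib matrix_add_rdistrib' matrix_diff_rdistrib'
          matrix_diff_ldistrib' matrix_neg_left' matrix_mul_assoc[symmetric]) (simp add: algebra_simps)
    ultimately show ?thesis by (simp add: T_def[abs_def])
  qed
  define W where "W y = W2 \<Psi> y E1 x2 E2" for y
  have Wk: "\<forall>z\<in>S. (deriv ^^ k) W z = trace (E1 ** T k z)" for k
  proof (induction k)
    case 0
    show ?case
    proof
      fix z assume z: "z \<in> S"
      have "trace (E1 ** T 0 z) = (1 / (z - x2)^2) * trace (E1 ** (\<Phi> z ** (M2 ** \<Psi> z)))"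
        by (simp add: T_def M2_def cmat_scale_mult_left cmat_scale_mult_right trace_cmat_scale)
      also have "trace (E1 ** (\<Phi> z ** (M2 ** \<Psi> z))) = trace (\<Psi> z ** (E1 ** \<Phi> z ** M2))"
      proof -
        have "trace (\<Psi> z ** (E1 ** \<Phi> z ** M2)) = trace ((E1 ** \<Phi> z ** M2) ** \<Psi> z)"
          by (rule trace_mul_sym)
        then show ?thesis by (simp add: matrix_mul_assoc)
      qed
      finally show "(deriv ^^ 0) W z = trace (E1 ** T 0 z)"
        by (simp add: W_def W2_def Mconj_def M2_def \<Phi>_def matrix_mul_assoc)
    qed
  next
    case (Suc k)
    show ?case
    proof
      fix z assume z: "z \<in> S"
      have "((\<lambda>w. trace (E1 ** T k w)) has_field_derivative trace (E1 ** T (Suc k) z)) (at z)"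
        by (rule mder_trace[OF Tder[OF z]])
      then have "((deriv ^^ k) W has_field_derivative trace (E1 ** T (Suc k) z)) (at z)"
        by (rule has_field_derivative_transform_within_open[OF _ S z]) (use Suc in auto)
      then show "(deriv ^^ Suc k) W z = trace (E1 ** T (Suc k) z)"
        by (simp add: DERIV_imp_deriv)
    qed
  qed
  show ?thesis
  proof (intro exI[of _ \<alpha>] conjI ballI)
    show "\<exists>k\<le>cdim g. \<alpha> k \<noteq> 0" using al(1) by (auto simp: m_def)
    fix z assume z: "z \<in> U - {x2}"
    then have zS: "z \<in> S" by (simp add: S_def)
    show "(\<Sum>k\<le>cdim g. poly (\<alpha> k) z \<odot> Dk \<Psi> D x2 E2 k z) = 0"
      using sum0[OF zS] by (simp add: m_def)
    have "(\<Sum>k\<le>m. poly (\<alpha> k) z * (deriv ^^ k) W z) = (\<Sum>k\<le>m. poly (\<alpha> k) z * trace (E1 ** (\<Phi> z ** (Dk \<Psi> D x2 E2 k z ** \<Psi> z))))"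
      using Wk zS by (simp add: T_def)
    also have "\<dots> = trace (E1 ** (\<Phi> z ** ((\<Sum>k\<le>m. poly (\<alpha> k) z \<odot> Dk \<Psi> D x2 E2 k z) ** \<Psi> z)))"
      by (rule trace_linear_sum[symmetric]) simp
    also have "\<dots> = 0" using sum0[OF zS] by (simp add: trace_def)
    finally show "(\<Sum>k\<le>cdim g. poly (\<alpha> k) z * (deriv ^^ k) (\<lambda>y. W2 \<Psi> y E1 x2 E2) z) = 0"
      by (simp add: m_def W_def[abs_def])
  qed
qed

end
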